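(* Let $A\in\mathbb{R}^{m\times n}$, $X\in\mathbb{R}^{n\times r}$ and $Y\in\mathbb{R}^{m\times r}$ satisfy $AX=Y$, where $\|X\|_0=k$ and the columns of $Y$ are linearly independent. Let $Q$ be a matrix whose columns form a basis of the orthogonal complement $R(Y)^\perp\subset\mathbb{R}^m$ of the column space of $Y$. Suppose $A$ satisfies the restricted isometry condition $0\leq \delta^L_{2k-r+1}(A)<1$. Then $$k-r=\min_{I\subset\{1,\dots,n\},\ |I|\geq k}\operatorname{rank}\left(Q^*A_I\right),$$ and $$\operatorname{supp}X=\arg\min_{I\subset\{1,\dots,n\},\ |I|\geq k}\operatorname{rank}\left(Q^*A_I\right),$$ i.e. $\operatorname{supp}X$ is the index set attaining this minimum.
   Context: For a matrix $X\in\mathbb{R}^{n\times r}$ with rows $\mathbf{x}^1,\dots,\mathbf{x}^n$, $\operatorname{supp}X=\{1\le i\le n:\mathbf{x}^i\neq 0\}$ is the set of indices of nonzero rows and $\|X\|_0=|\operatorname{supp}X|$. For an index set $I\subset\{1,\dots,n\}$, $A_I$ denotes the submatrix of $A$ consisting of the columns indexed by $I$. $R(Y)$ denotes the column space (range) of $Y$, and $Q^*$ denotes the (conjugate) transpose of $Q$. The condition $0\leq\delta^L_{s}(A)<1$ means that there is a left RIP constant $\delta^L_s\in[0,1)$ with $(1-\delta^L_s)\|\mathbf{x}\|^2\leq\|A\mathbf{x}\|^2$ for all $\mathbf{x}\in\mathbb{R}^n$ with at most $s$ nonzero entries; here $s=2k-r+1$. *)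

theory Defs
  imports "Jordan_Normal_Form.DL_Rank_Submatrix"
begin

definition row_supp :: "real mat \<Rightarrow> nat set" where
  "row_supp X = {i. i < dim_row X \<and> row X i \<noteq> 0\<^sub>v (dim_col X)}"

definition vec_nnz :: "real vec \<Rightarrow> nat" where
  "vec_nnz x = card {i. i < dim_vec x \<and> x $ i \<noteq> 0}"

definition left_RIP :: "real mat \<Rightarrow> nat \<Rightarrow> real \<Rightarrow> bool" where
  "left_RIP A s \<delta> \<longleftrightarrow> 0 \<le> \<delta> \<and> \<delta> < 1 \<and>
     (\<forall>x \<in> carrier_vec (dim_col A). vec_nnz x \<le> s \<longrightarrow>
        (1 - \<delta>) * (x \<bullet> x) \<le> (A *\<^sub>v x) \<bullet> (A *\<^sub>v x))"

definition cols_sub :: "real mat \<Rightarrow> nat set \<Rightarrow> real mat" where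
  "cols_sub A I = submatrix A UNIV I"

end

theory Submission
  imports Defs
begin

lemma mult_zero_vec_right[simp]:
  "B \<in> carrier_mat n m \<Longrightarrow> B *\<^sub>v 0\<^sub>v m = 0\<^sub>v n"
  by (intro eq_vecI, auto)

lemma self_scalar_zero:
  fixes v :: "real vec"
  assumes "v \<bullet> v = 0"
  shows "v = 0\<^sub>v (dim_vec v)"
proof (rule eq_vecI)
  have eq: "(\<Sum>i\<in>{0..<dim_vec v}. v $ i * v $ i) = 0" using assms unfolding scalar_prod_def by simp
  have "\<forall>i\<in>{0..<dim_vec v}. v $ i * v $ i = 0"
    using sum_nonneg_eq_0_iff[of "{0..<dim_vec v}" "\<lambda>i. v $ i * v $ i"] eq by auto
  then show "\<And>i. i < dim_vec (0\<^sub>v (dim_vec v)) \<Longrightarrow> v $ i = 0\<^sub>v (dim_vec v) $ i" by auto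
qed simp

lemma underdetermined:
  fixes ws :: "real vec list"
  assumes ws: "set ws \<subseteq> carrier_vec N" and len: "length ws < N"
  shows "\<exists>u \<in> carrier_vec N. u \<noteq> 0\<^sub>v N \<and> (\<forall>w\<in>set ws. w \<bullet> u = 0)"
proof -
  define rs where "rs = ws @ replicate (N - length ws) (0\<^sub>v N)"
  have lrs: "length rs = N" using len unfolding rs_def by simp
  define M where "M = mat_of_rows N rs"
  have M: "M \<in> carrier_mat N N" unfolding M_def using mat_of_rows_carrier(1)[of N rs] lrs by simp
  have rsc: "\<And>i. i < N \<Longrightarrow> rs ! i \<in> carrier_vec N"
    unfolding rs_def using ws len by (auto simp: nth_append)
  have rowM: "\<And>i. i < N \<Longrightarrow> row M i = rs ! i" unfolding M_def using lrs rsc by simp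
  have last0: "rs ! (N - 1) = 0\<^sub>v N" unfolding rs_def using len by (auto simp: nth_append)
  have "M = mat\<^sub>r N N (\<lambda>i. if i = N - 1 then 0\<^sub>v N else rs ! i)"
    by (rule eq_matI, insert last0 M, auto simp: M_def mat_of_rows_index lrs)
  then have "det M = 0" using det_row_0[of "N - 1" N "\<lambda>i. rs ! i"] len rsc by auto
  then obtain v where v: "v \<in> carrier_vec N" "v \<noteq> 0\<^sub>v N" "M *\<^sub>v v = 0\<^sub>v N"
    using det_0_iff_vec_prod_zero_field[OF M] by auto
  have "\<forall>w\<in>set ws. w \<bullet> v = 0"
  proof
    fix w assume "w \<in> set ws"
    then obtain j where j: "j < length ws" "ws ! j = w" by (auto simp: in_set_conv_nth)
    have "(M *\<^sub>v v) $ j = row M j \<bullet> v" using M j len by auto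
    also have "row M j = w" using rowM j len unfolding rs_def by (simp add: nth_append)
    finally show "w \<bullet> v = 0" using v j len by auto
  qed
  then show ?thesis using v by auto
qed

lemma cols_submatrix_eq:
  assumes I: "I \<subseteq> {..<dim_col P}"
  shows "set (cols (submatrix P UNIV I)) = col P ` I"
proof
  show "set (cols (submatrix P UNIV I)) \<subseteq> col P ` I"
  proof
    fix c assume "c \<in> set (cols (submatrix P UNIV I))"
    then obtain j where j: "j < dim_col (submatrix P UNIV I)" "c = col (submatrix P UNIV I) j"
      by (auto simp: in_set_conv_nth)
    have jc: "j < card {j. j < dim_col P \<and> j \<in> I}" using j by (simp add: dim_submatrix)
    have "c = col P (pick I j)"
    proof (rule eq_vecI)
      show "dim_vec c = dim_vec (col P (pick I j))" using j by (simp add: dim_submatrix)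
      fix i assume "i < dim_vec (col P (pick I j))"
      then have i: "i < dim_row P" by simp
      then show "c $ i = col P (pick I j) $ i" using j jc pick_le[OF jc]
        by (simp add: dim_submatrix submatrix_index pick_UNIV)
    qed
    moreover have "pick I j \<in> I"
    proof -
      have "{j. j < dim_col P \<and> j \<in> I} = I" using I by auto
      then have "j < card I" using jc by simp
      then show ?thesis using pick_in_set_le by blast
    qed
    ultimately show "c \<in> col P ` I" by blast
  qed
next
  show "col P ` I \<subseteq> set (cols (submatrix P UNIV I))"
  proof
    fix c assume "c \<in> col P ` I"
    then obtain i where i: "i \<in> I" "c = col P i" by auto
    have fin: "finite I" using I finite_subset by blast
    have eqI: "{j. j < dim_col P \<and> j \<in> I} = I" using I by auto
    define j where "j = card {a\<in>I. a < i}"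
    have "{a\<in>I. a < i} \<subset> I" using i by auto
    then have jl: "j < card I" unfolding j_def using fin psubset_card_mono by blast
    have pj: "pick I j = i" unfolding j_def using pick_card_in_set[OF i(1)] .
    have jd: "j < dim_col (submatrix P UNIV I)" using jl eqI by (simp add: dim_submatrix)
    have "col (submatrix P UNIV I) j = col P i"
    proof (rule eq_vecI)
      show "dim_vec (col (submatrix P UNIV I) j) = dim_vec (col P i)" by (simp add: dim_submatrix)
      fix a assume "a < dim_vec (col P i)"
      then show "col (submatrix P UNIV I) j $ a = col P i $ a" using jd jl eqI pj
        by (simp add: dim_submatrix submatrix_index pick_UNIV col_def)
    qed
    then show "c \<in> set (cols (submatrix P UNIV I))" using i jd
      by (metis cols_length cols_nth nth_mem)
  qed
qed

lemma mult_submatrix: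
  assumes M: "M \<in> carrier_mat a b" and A: "A \<in> carrier_mat b c"
  shows "M * submatrix A UNIV I = submatrix (M * A) UNIV I"
proof (rule eq_matI)
  show "dim_row (M * submatrix A UNIV I) = dim_row (submatrix (M * A) UNIV I)"
    using M A by (simp add: dim_submatrix)
  show "dim_col (M * submatrix A UNIV I) = dim_col (submatrix (M * A) UNIV I)"
    using M A by (simp add: dim_submatrix)
  fix i j assume i: "i < dim_row (submatrix (M * A) UNIV I)" and j: "j < dim_col (submatrix (M * A) UNIV I)"
  have i': "i < a" using i M by (simp add: dim_submatrix)
  have jc: "j < card {j. j < c \<and> j \<in> I}" using j M A by (simp add: dim_submatrix)
  have pj: "pick I j < c" using pick_le[OF jc] .
  have "col (submatrix A UNIV I) j = col A (pick I j)"
    by (rule eq_vecI, insert A jc pj, auto simp: dim_submatrix submatrix_index pick_UNIV)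
  then show "(M * submatrix A UNIV I) $$ (i, j) = submatrix (M * A) UNIV I $$ (i, j)"
    using i' jc pj M A by (simp add: dim_submatrix submatrix_index pick_UNIV)
qed

context vec_space
begin

lemma rank_max_indpt:
  assumes M: "M \<in> carrier_mat n nc"
  obtains S where "S \<subseteq> set (cols M)" "lin_indpt S" "finite S" "card S = rank M"
    "\<And>c. c \<in> set (cols M) \<Longrightarrow> c \<in> span S"
proof -
  obtain S where max: "maximal S (\<lambda>T. T \<subseteq> set (cols M) \<and> lin_indpt T)"
    using maximal_exists[of "(\<lambda>T. T \<subseteq> set (cols M) \<and> lin_indpt T)" "card (set (cols M))" "{}"]
    by (meson List.finite_set card_mono empty_iff empty_subsetI finite_lin_indpt2 rev_finite_subset)
  have S: "S \<subseteq> set (cols M)" "lin_indpt S" using max unfolding maximal_def by auto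
  have fin: "finite S" using S(1) finite_subset by blast
  have colsC: "set (cols M) \<subseteq> carrier_vec n" using M cols_dim by blast
  have SC: "S \<subseteq> carrier_vec n" using S(1) colsC by blast
  have rk: "card S = rank M" using rank_card_indpt[OF M max] by simp
  have sp: "c \<in> span S" if c: "c \<in> set (cols M)" for c
  proof (cases "c \<in> S")
    case True
    then show ?thesis using span_mem[OF _ True] SC by simp
  next
    case False
    have "\<not> (insert c S \<subseteq> set (cols M) \<and> lin_indpt (insert c S))"
    proof
      assume "insert c S \<subseteq> set (cols M) \<and> lin_indpt (insert c S)"
      then have "insert c S = S" using max unfolding maximal_def by blast
      then show False using False by blast
    qed
    then have "lin_dep (S \<union> {c})" using c S(1) by auto
    then show ?thesis using lin_dep_iff_in_span[OF SC S(2) _ False] c colsC by auto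
  qed
  show thesis using that[OF S fin rk sp] .
qed

lemma rank_factor:
  assumes P: "P \<in> carrier_mat n N" and I: "I \<subseteq> {..<N}"
    and rk: "rank (submatrix P UNIV I) \<le> t"
  shows "\<exists>ws. length ws \<le> t \<and> set ws \<subseteq> carrier_vec N \<and>
    (\<forall>u\<in>carrier_vec N. (\<forall>i<N. i \<notin> I \<longrightarrow> u $ i = 0) \<longrightarrow>
       (\<forall>w\<in>set ws. w \<bullet> u = 0) \<longrightarrow> P *\<^sub>v u = 0\<^sub>v n)"
proof -
  define PI where "PI = submatrix P UNIV I"
  have PI: "PI \<in> carrier_mat n (dim_col PI)" unfolding PI_def using P by (intro carrier_matI, auto simp: dim_submatrix)
  have colsPI: "set (cols PI) = col P ` I" unfolding PI_def using cols_submatrix_eq I P by auto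
  obtain S where S: "S \<subseteq> set (cols PI)" "lin_indpt S" "finite S" "card S = rank PI"
    "\<And>c. c \<in> set (cols PI) \<Longrightarrow> c \<in> span S"
    using rank_max_indpt[OF PI] by blast
  have SC: "S \<subseteq> carrier_vec n" using S(1) PI cols_dim by blast
  obtain bs where bs: "set bs = S" "distinct bs" using finite_distinct_list[OF S(3)] by blast
  define t' where "t' = length bs"
  have t't: "t' \<le> t" using rk S(4) bs distinct_card unfolding t'_def PI_def by metis
  define B where "B = mat_of_cols n bs"
  have B: "B \<in> carrier_mat n t'" unfolding B_def t'_def by simp
  have colsB: "cols B = bs" unfolding B_def using bs SC by (simp add: cols_mat_of_cols)
  have ex: "\<exists>w \<in> carrier_vec t'. col P i = B *\<^sub>v w" if i: "i \<in> I" for i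
  proof -
    have "col P i \<in> span S" using S(5) colsPI i by auto
    then obtain a where a: "a \<in> S \<rightarrow> UNIV" "lincomb a S = col P i"
      using finite_in_span[OF S(3) SC] by auto
    have "B *\<^sub>v vec t' (\<lambda>j. a (col B j)) = lincomb a (set (cols B))"
      by (rule mat_mult_eq_lincomb[OF B], simp add: colsB bs)
    then show ?thesis using a colsB bs by (intro bexI[of _ "vec t' (\<lambda>j. a (col B j))"]) auto
  qed
  define wf where "wf i = (SOME w. w \<in> carrier_vec t' \<and> col P i = B *\<^sub>v w)" for i
  have wf: "wf i \<in> carrier_vec t' \<and> col P i = B *\<^sub>v wf i" if "i \<in> I" for i
    unfolding wf_def using someI_ex[OF ex[OF that, unfolded Bex_def]] .
  define W where "W = mat t' N (\<lambda>(a,i). if i \<in> I then wf i $ a else 0)"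
  have W: "W \<in> carrier_mat t' N" unfolding W_def by simp
  have colW: "col W i = (if i \<in> I then wf i else 0\<^sub>v t')" if "i < N" for i
  proof (cases "i \<in> I")
    case True
    then have wc: "wf i \<in> carrier_vec t'" using wf by blast
    show ?thesis by (rule eq_vecI, insert wc that True, auto simp: W_def)
  next
    case False
    then show ?thesis by (intro eq_vecI, insert that, auto simp: W_def)
  qed
  have BW: "(B * W) $$ (x, i) = (if i \<in> I then P $$ (x, i) else 0)" if "x < n" "i < N" for x i
  proof -
    have "(B * W) $$ (x, i) = row B x \<bullet> col W i" using B W that by simp
    also have "\<dots> = (if i \<in> I then (B *\<^sub>v wf i) $ x else 0)"
      using colW[OF that(2)] B that by auto
    also have "\<dots> = (if i \<in> I then P $$ (x, i) else 0)"
    proof (cases "i \<in> I")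
      case True
      then have "(B *\<^sub>v wf i) $ x = col P i $ x" using wf by metis
      also have "\<dots> = P $$ (x, i)" using P that True I by auto
      finally show ?thesis using True by simp
    qed simp
    finally show ?thesis .
  qed
  show ?thesis
  proof (intro exI[of _ "rows W"] conjI ballI impI)
    show "length (rows W) \<le> t" using W t't by simp
    show "set (rows W) \<subseteq> carrier_vec N" using W by (auto simp: rows_def)
    fix u :: "'a vec" assume u: "u \<in> carrier_vec N" and supp: "\<forall>i<N. i \<notin> I \<longrightarrow> u $ i = 0"
      and orth: "\<forall>w\<in>set (rows W). w \<bullet> u = 0"
    have Wu: "W *\<^sub>v u = 0\<^sub>v t'"
    proof (rule eq_vecI)
      fix a assume "a < dim_vec (0\<^sub>v t')"
      then have a: "a < t'" by simp
      have "row W a \<in> set (rows W)" using a W by (auto simp: rows_def)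
      then show "(W *\<^sub>v u) $ a = 0\<^sub>v t' $ a" using orth a W by auto
    qed (insert W, auto)
    have "P *\<^sub>v u = (B * W) *\<^sub>v u"
    proof (rule eq_vecI)
      fix x assume "x < dim_vec ((B * W) *\<^sub>v u)"
      then have x: "x < n" using B by simp
      have "(P *\<^sub>v u) $ x = (\<Sum>i = 0..<N. P $$ (x, i) * u $ i)"
        using P u x by (auto simp: mult_mat_vec_def scalar_prod_def)
      also have "\<dots> = (\<Sum>i = 0..<N. (B * W) $$ (x, i) * u $ i)"
        by (rule sum.cong, auto simp: BW x supp)
      also have "\<dots> = ((B * W) *\<^sub>v u) $ x"
        using B W u x by (auto simp: mult_mat_vec_def scalar_prod_def)
      finally show "(P *\<^sub>v u) $ x = ((B * W) *\<^sub>v u) $ x" .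
    qed (insert P B W, auto)
    also have "\<dots> = B *\<^sub>v (W *\<^sub>v u)" using B W u by simp
    also have "\<dots> = 0\<^sub>v n" using Wu B by simp
    finally show "P *\<^sub>v u = 0\<^sub>v n" .
  qed
qed

lemma rank_inj:
  assumes P: "P \<in> carrier_mat n N" and I: "I \<subseteq> {..<N}"
    and rk: "t \<le> rank (submatrix P UNIV I)"
  shows "\<exists>T \<subseteq> I. card T = t \<and>
    (\<forall>u\<in>carrier_vec N. (\<forall>i<N. i \<notin> T \<longrightarrow> u $ i = 0) \<longrightarrow>
       P *\<^sub>v u = 0\<^sub>v n \<longrightarrow> u = 0\<^sub>v N)"
proof -
  define PI where "PI = submatrix P UNIV I"
  have PI: "PI \<in> carrier_mat n (dim_col PI)" unfolding PI_def using P by (intro carrier_matI, auto simp: dim_submatrix)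
  have colsPI: "set (cols PI) = col P ` I" unfolding PI_def using cols_submatrix_eq I P by auto
  obtain S where S: "S \<subseteq> set (cols PI)" "lin_indpt S" "finite S" "card S = rank PI"
    "\<And>c. c \<in> set (cols PI) \<Longrightarrow> c \<in> span S"
    using rank_max_indpt[OF PI] by blast
  have SC: "S \<subseteq> carrier_vec n" using S(1) PI cols_dim by blast
  obtain S' where S': "S' \<subseteq> S" "card S' = t" "finite S'"
    using obtain_subset_with_card_n[of t S] rk S(4) unfolding PI_def by metis
  have ex: "\<exists>i. i \<in> I \<and> col P i = s" if "s \<in> S'" for s
    using that S' S(1) colsPI by auto
  define ind where "ind s = (SOME i. i \<in> I \<and> col P i = s)" for s
  have ind: "ind s \<in> I \<and> col P (ind s) = s" if "s \<in> S'" for s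
    unfolding ind_def using someI_ex[OF ex[OF that]] .
  have inj: "inj_on ind S'" by (rule inj_onI, metis ind)
  define T where "T = ind ` S'"
  have TI: "T \<subseteq> I" unfolding T_def using ind by auto
  have cT: "card T = t" unfolding T_def using card_image[OF inj] S' by simp
  show ?thesis
  proof (intro exI[of _ T] conjI ballI impI TI cT)
    fix u :: "'a vec" assume u: "u \<in> carrier_vec N" and supp: "\<forall>i<N. i \<notin> T \<longrightarrow> u $ i = 0"
      and Pu: "P *\<^sub>v u = 0\<^sub>v n"
    have S'C: "S' \<subseteq> carrier_vec n" using S' SC by auto
    have lc: "lincomb (\<lambda>s. u $ ind s) S' = P *\<^sub>v u"
    proof (rule eq_vecI)
      fix x assume "x < dim_vec (P *\<^sub>v u)"
      then have x: "x < n" using P by simp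
      have "lincomb (\<lambda>s. u $ ind s) S' $ x = (\<Sum>s\<in>S'. u $ ind s * s $ x)"
        using lincomb_index[OF x S'C] .
      also have "\<dots> = (\<Sum>s\<in>S'. P $$ (x, ind s) * u $ ind s)"
      proof (rule sum.cong)
        fix s assume s: "s \<in> S'"
        have "ind s < N" using ind[OF s] I by auto
        then have "P $$ (x, ind s) = col P (ind s) $ x" using P x by auto
        then show "u $ ind s * s $ x = P $$ (x, ind s) * u $ ind s" using ind[OF s] by simp
      qed simp
      also have "\<dots> = (\<Sum>i\<in>T. P $$ (x, i) * u $ i)"
        unfolding T_def by (rule sum.reindex[OF inj, symmetric, unfolded comp_def])
      also have "\<dots> = (\<Sum>i = 0..<N. P $$ (x, i) * u $ i)"
      proof (rule sum.mono_neutral_left)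
        show "T \<subseteq> {0..<N}" using TI I by auto
        show "\<forall>i\<in>{0..<N} - T. P $$ (x, i) * u $ i = 0" using supp by simp
      qed simp
      also have "\<dots> = (P *\<^sub>v u) $ x"
        using P u x by (auto simp: mult_mat_vec_def scalar_prod_def)
      finally show "lincomb (\<lambda>s. u $ ind s) S' $ x = (P *\<^sub>v u) $ x" .
    next
      show "dim_vec (lincomb (\<lambda>s. u $ ind s) S') = dim_vec (P *\<^sub>v u)"
        using P lincomb_dim[OF S'(3) S'C] by simp
    qed
    have "(\<lambda>s. u $ ind s) \<in> S' \<rightarrow> {0}"
      using not_lindepD[OF S(2) S'(3) S'(1), of "\<lambda>s. u $ ind s"] lc Pu by simp
    then have zT: "u $ i = 0" if "i \<in> T" for i
    proof -
      from that obtain s where "s \<in> S'" "i = ind s" unfolding T_def by blast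
      then show ?thesis using \<open>(\<lambda>s. u $ ind s) \<in> S' \<rightarrow> {0}\<close> by blast
    qed
    show "u = 0\<^sub>v N"
    proof (rule eq_vecI)
      fix i assume "i < dim_vec (0\<^sub>v N)"
      then have i: "i < N" by simp
      show "u $ i = 0\<^sub>v N $ i" using i supp zT by (cases "i \<in> T") auto
    qed (use u in simp)
  qed
qed

end


lemma underdetermined_supp:
  fixes ws :: "real vec list"
  assumes J: "J \<subseteq> {..<N}" and ws: "set ws \<subseteq> carrier_vec N" and len: "length ws < card J"
  shows "\<exists>u\<in>carrier_vec N. u \<noteq> 0\<^sub>v N \<and> (\<forall>i<N. i \<notin> J \<longrightarrow> u $ i = 0) \<and> (\<forall>w\<in>set ws. w \<bullet> u = 0)"
proof -
  define us :: "real vec list" where "us = map (unit_vec N) (sorted_list_of_set ({0..<N} - J))"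
  have J': "J \<subseteq> {0..<N}" using J by auto
  have cJ: "card J \<le> N" using card_mono[OF _ J'] by simp
  have lus: "length us = N - card J" unfolding us_def using card_Diff_subset[OF finite_subset[OF J'] J'] by simp
  have C: "set (ws @ us) \<subseteq> carrier_vec N" using ws unfolding us_def by auto
  have L: "length (ws @ us) < N" using lus len cJ by simp
  obtain u where u: "u \<in> carrier_vec N" "u \<noteq> 0\<^sub>v N" "\<forall>w\<in>set (ws @ us). w \<bullet> u = 0"
    using underdetermined[OF C L] by blast
  have "\<forall>i<N. i \<notin> J \<longrightarrow> u $ i = 0"
  proof (intro allI impI)
    fix i assume i: "i < N" "i \<notin> J"
    then have "unit_vec N i \<in> set us" unfolding us_def by auto
    then have "unit_vec N i \<bullet> u = 0" using u by auto
    then show "u $ i = 0" using u i by simp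
  qed
  then show ?thesis using u by auto
qed

lemma rows_sel:
  fixes M :: "real mat"
  assumes M: "M \<in> carrier_mat e N" and F: "F \<subseteq> {..<e}"
  shows "set (map (row M) (sorted_list_of_set F)) \<subseteq> carrier_vec N"
    "length (map (row M) (sorted_list_of_set F)) = card F"
    "\<And>u. u \<in> carrier_vec N \<Longrightarrow> \<forall>w\<in>set (map (row M) (sorted_list_of_set F)). w \<bullet> u = 0 \<Longrightarrow>
        a \<in> F \<Longrightarrow> (M *\<^sub>v u) $ a = 0"
proof -
  have fin: "finite F" using F finite_subset by blast
  show "set (map (row M) (sorted_list_of_set F)) \<subseteq> carrier_vec N" using M F by auto
  show "length (map (row M) (sorted_list_of_set F)) = card F" using fin by simp
  fix u assume u: "u \<in> carrier_vec N" and o: "\<forall>w\<in>set (map (row M) (sorted_list_of_set F)). w \<bullet> u = 0"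
    and a: "a \<in> F"
  have "row M a \<in> set (map (row M) (sorted_list_of_set F))" using a fin by simp
  then have "row M a \<bullet> u = 0" using o by blast
  then show "(M *\<^sub>v u) $ a = 0" using M F a by auto
qed

lemma card_supp_le:
  assumes "finite F" "\<And>i. i < N \<Longrightarrow> z $ i \<noteq> 0 \<Longrightarrow> i \<in> F"
  shows "card {i. i < N \<and> z $ i \<noteq> (0::real)} \<le> card F"
  by (rule card_mono, insert assms, auto)


locale ctx =
  fixes A X Y Q :: "real mat" and m n r k p :: nat and \<delta> :: real
  assumes A: "A \<in> carrier_mat m n"
    and X: "X \<in> carrier_mat n r"
    and Y: "Y \<in> carrier_mat m r"
    and AXY: "A * X = Y"
    and k: "card (row_supp X) = k"
    and Y_indep: "\<forall>c \<in> carrier_vec r. Y *\<^sub>v c = 0\<^sub>v m \<longrightarrow> c = 0\<^sub>v r"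
    and Q: "Q \<in> carrier_mat m p"
    and Q_indep: "\<forall>c \<in> carrier_vec p. Q *\<^sub>v c = 0\<^sub>v m \<longrightarrow> c = 0\<^sub>v p"
    and Q_span: "{Q *\<^sub>v c | c. c \<in> carrier_vec p} =
                 {v \<in> carrier_vec m. \<forall>d \<in> carrier_vec r. v \<bullet> (Y *\<^sub>v d) = 0}"
    and RIP: "left_RIP A (2 * k - r + 1) \<delta>"
begin

abbreviation "S \<equiv> row_supp X"

lemma S_sub: "S \<subseteq> {..<n}" using X unfolding row_supp_def by auto
lemma finS: "finite S" using S_sub finite_subset by blast

lemma Xz: assumes "i < n" "i \<notin> S" "j < r" shows "X $$ (i, j) = 0"
proof -
  have "row X i = 0\<^sub>v r" using assms X unfolding row_supp_def by auto
  then have "row X i $ j = 0" using assms by simp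
  then show ?thesis using assms X by simp
qed

lemma Xcz: assumes c: "c \<in> carrier_vec r" and "i < n" "i \<notin> S" shows "(X *\<^sub>v c) $ i = 0"
proof -
  have "row X i = 0\<^sub>v r" using assms X unfolding row_supp_def by auto
  then show ?thesis using assms X by simp
qed

lemma AXc: "c \<in> carrier_vec r \<Longrightarrow> A *\<^sub>v (X *\<^sub>v c) = Y *\<^sub>v c"
  using A X AXY by (metis assoc_mult_mat_vec)

lemma X_inj: assumes c: "c \<in> carrier_vec r" and Xc: "X *\<^sub>v c = 0\<^sub>v n" shows "c = 0\<^sub>v r"
proof -
  have "Y *\<^sub>v c = 0\<^sub>v m" using AXc[OF c] Xc A by simp
  then show ?thesis using Y_indep c by blast
qed

lemma colQ: assumes a: "a < p" shows "col Q a = Q *\<^sub>v unit_vec p a"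
  by (rule eq_vecI, insert Q a, auto)

lemma QYz: assumes d: "d \<in> carrier_vec r" shows "transpose_mat Q *\<^sub>v (Y *\<^sub>v d) = 0\<^sub>v p"
proof (rule eq_vecI)
  fix a assume "a < dim_vec (0\<^sub>v p)"
  then have a: "a < p" by simp
  have "Q *\<^sub>v unit_vec p a \<in> {Q *\<^sub>v c | c. c \<in> carrier_vec p}" by auto
  then have "(Q *\<^sub>v unit_vec p a) \<bullet> (Y *\<^sub>v d) = 0" using Q_span d by auto
  then show "(transpose_mat Q *\<^sub>v (Y *\<^sub>v d)) $ a = 0\<^sub>v p $ a"
    using a Q colQ[OF a] by simp
qed (use Q in simp)

lemma scalar_self_nonneg: "0 \<le> (v::real vec) \<bullet> v"
  unfolding scalar_prod_def by (rule sum_nonneg, simp)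

lemma self_zero: assumes v: "(v::real vec) \<in> carrier_vec N" "v \<bullet> v = 0" shows "v = 0\<^sub>v N"
  using self_scalar_zero[OF v(2)] v(1) by simp

lemma vec_minus_zero: assumes "(v::real vec) \<in> carrier_vec N" "w \<in> carrier_vec N" "v - w = 0\<^sub>v N"
  shows "v = w"
proof (rule eq_vecI)
  fix i assume i: "i < dim_vec w"
  have "(v - w) $ i = 0" using assms i by simp
  moreover have "(v - w) $ i = v $ i - w $ i" using assms(1,2) i by simp
  ultimately show "v $ i = w $ i" by simp
qed (use assms in simp)

lemma G_ex: "\<exists>G \<in> carrier_mat r m. \<forall>w \<in> carrier_vec m. transpose_mat Q *\<^sub>v w = 0\<^sub>v p \<longrightarrow> w = Y *\<^sub>v (G *\<^sub>v w)"
proof -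
  define M where "M = transpose_mat Y * Y"
  have M: "M \<in> carrier_mat r r" unfolding M_def using Y by simp
  have YtY: "transpose_mat Y *\<^sub>v (Y *\<^sub>v v) = M *\<^sub>v v" if "v \<in> carrier_vec r" for v
    unfolding M_def using Y that by simp
  have "det M \<noteq> 0"
  proof
    assume "det M = 0"
    then obtain v where v: "v \<in> carrier_vec r" "v \<noteq> 0\<^sub>v r" "M *\<^sub>v v = 0\<^sub>v r"
      using det_0_iff_vec_prod_zero_field[OF M] by auto
    have "(Y *\<^sub>v v) \<bullet> (Y *\<^sub>v v) = (transpose_mat Y *\<^sub>v (Y *\<^sub>v v)) \<bullet> v"
      using transpose_vec_mult_scalar[OF Y v(1), of "Y *\<^sub>v v"] Y v by simp
    also have "\<dots> = 0" using YtY[OF v(1)] v by simp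
    moreover have "Y *\<^sub>v v \<in> carrier_vec m" using Y v by simp
    ultimately have "Y *\<^sub>v v = 0\<^sub>v m" using self_zero[of "Y *\<^sub>v v" m] by simp
    then show False using Y_indep v by blast
  qed
  then have "M \<in> Units (ring_mat TYPE(real) r ())" by (rule det_non_zero_imp_unit[OF M])
  then obtain H where H: "H \<in> carrier_mat r r" "H * M = 1\<^sub>m r" "M * H = 1\<^sub>m r"
    unfolding Units_def ring_mat_def by auto
  define G where "G = H * transpose_mat Y"
  have G: "G \<in> carrier_mat r m" unfolding G_def using H Y by simp
  show ?thesis
  proof (intro bexI[OF _ G] ballI impI)
    fix w assume w: "w \<in> carrier_vec m" and Qw: "transpose_mat Q *\<^sub>v w = 0\<^sub>v p"
    define w' where "w' = w - Y *\<^sub>v (G *\<^sub>v w)"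
    have w': "w' \<in> carrier_vec m" unfolding w'_def using w Y G by simp
    have Gw: "G *\<^sub>v w = H *\<^sub>v (transpose_mat Y *\<^sub>v w)" unfolding G_def using H Y w by simp
    have "transpose_mat Y *\<^sub>v (Y *\<^sub>v (G *\<^sub>v w)) = M *\<^sub>v (H *\<^sub>v (transpose_mat Y *\<^sub>v w))"
    proof -
      have "H *\<^sub>v (transpose_mat Y *\<^sub>v w) \<in> carrier_vec r" using H Y w by simp
      then show ?thesis using YtY[of "G *\<^sub>v w"] Gw by simp
    qed
    also have "\<dots> = (M * H) *\<^sub>v (transpose_mat Y *\<^sub>v w)"
      by (rule assoc_mult_mat_vec[symmetric, OF M H(1)], insert Y w, simp)
    also have "\<dots> = transpose_mat Y *\<^sub>v w" unfolding H(3) using Y w by simp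
    finally have e1: "transpose_mat Y *\<^sub>v (Y *\<^sub>v (G *\<^sub>v w)) = transpose_mat Y *\<^sub>v w" .
    have Ytw': "transpose_mat Y *\<^sub>v w' = 0\<^sub>v r"
      unfolding w'_def using e1 Y G w by (simp add: mult_minus_distrib_mat_vec)
    have "\<forall>d \<in> carrier_vec r. w' \<bullet> (Y *\<^sub>v d) = 0"
    proof
      fix d :: "real vec" assume d: "d \<in> carrier_vec r"
      have "w' \<bullet> (Y *\<^sub>v d) = (transpose_mat Y *\<^sub>v w') \<bullet> d"
        using transpose_vec_mult_scalar[OF Y d w'] by simp
      then show "w' \<bullet> (Y *\<^sub>v d) = 0" using Ytw' d by simp
    qed
    then have "w' \<in> {Q *\<^sub>v c | c. c \<in> carrier_vec p}" using Q_span w' by auto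
    then obtain c' where c': "c' \<in> carrier_vec p" "w' = Q *\<^sub>v c'" by auto
    have Qtw': "transpose_mat Q *\<^sub>v w' = 0\<^sub>v p"
      unfolding w'_def using Qw QYz[of "G *\<^sub>v w"] Q Y G w by (simp add: mult_minus_distrib_mat_vec)
    have "w' \<bullet> w' = (transpose_mat Q *\<^sub>v w') \<bullet> c'"
      using transpose_vec_mult_scalar[OF Q c'(1) w'] c'(2) by simp
    also have "\<dots> = 0" using Qtw' c' by simp
    finally have "w' = 0\<^sub>v m" using self_zero[OF w'] by simp
    then show "w = Y *\<^sub>v (G *\<^sub>v w)" using vec_minus_zero[of w m "Y *\<^sub>v (G *\<^sub>v w)"] w Y G
      unfolding w'_def by simp
  qed
qed

lemma RIPz: assumes z: "z \<in> carrier_vec n" and Az: "A *\<^sub>v z = 0\<^sub>v m"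
  and c: "card {i. i < n \<and> z $ i \<noteq> 0} \<le> 2 * k - r + 1"
  shows "z = 0\<^sub>v n"
proof -
  have "vec_nnz z \<le> 2 * k - r + 1" using c z unfolding vec_nnz_def by simp
  then have "(1 - \<delta>) * (z \<bullet> z) \<le> (A *\<^sub>v z) \<bullet> (A *\<^sub>v z)"
    using RIP z A unfolding left_RIP_def by auto
  then have "(1 - \<delta>) * (z \<bullet> z) \<le> 0" using Az by simp
  moreover have "\<delta> < 1" using RIP unfolding left_RIP_def by auto
  ultimately have "z \<bullet> z \<le> 0" by (simp add: mult_le_0_iff)
  then have "z \<bullet> z = 0" using scalar_self_nonneg[of z] by linarith
  then show ?thesis using self_zero[OF z] by simp
qed

lemma r_le_k: "r \<le> k"
proof (rule ccontr)
  assume "\<not> r \<le> k"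
  then have lt: "k < r" by simp
  define ws where "ws = map (row X) (sorted_list_of_set S)"
  have ws: "set ws \<subseteq> carrier_vec r" "length ws = k"
    using rows_sel[OF X S_sub] k unfolding ws_def by auto
  obtain c where c: "c \<in> carrier_vec r" "c \<noteq> 0\<^sub>v r" "\<forall>w\<in>set ws. w \<bullet> c = 0"
    using underdetermined[OF ws(1)] ws(2) lt by auto
  have "X *\<^sub>v c = 0\<^sub>v n"
  proof (rule eq_vecI)
    fix i assume "i < dim_vec (0\<^sub>v n)"
    then have i: "i < n" by simp
    show "(X *\<^sub>v c) $ i = 0\<^sub>v n $ i"
    proof (cases "i \<in> S")
      case True
      then show ?thesis using rows_sel(3)[OF X S_sub c(1)] c(3) i unfolding ws_def by simp
    qed (use Xcz[OF c(1) i] i in simp)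
  qed (use X in simp)
  then show False using X_inj[OF c(1)] c(2) by simp
qed


abbreviation "PP \<equiv> transpose_mat Q * A"
lemma PP: "PP \<in> carrier_mat p n" using Q A by simp
lemma PPu: "u \<in> carrier_vec n \<Longrightarrow> PP *\<^sub>v u = transpose_mat Q *\<^sub>v (A *\<^sub>v u)"
  using Q A by simp

lemma GA_zero:
  assumes G: "G \<in> carrier_mat r m" and u: "u \<in> carrier_vec n"
    and o: "\<forall>w\<in>set (map (row (G * A)) (sorted_list_of_set F)). w \<bullet> u = 0" and F: "F \<subseteq> {..<r}"
    and a: "a \<in> F"
  shows "(G *\<^sub>v (A *\<^sub>v u)) $ a = 0"
proof -
  have GA: "G * A \<in> carrier_mat r n" using G A by simp
  have "((G * A) *\<^sub>v u) $ a = 0" using rows_sel(3)[OF GA F u o a] .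
  then show ?thesis using G A u by simp
qed

lemma S_lower: "k - r \<le> vec_space.rank p (submatrix PP UNIV S)"
proof (rule ccontr)
  assume "\<not> ?thesis"
  then have rk: "vec_space.rank p (submatrix PP UNIV S) \<le> k - r - 1" by simp
  obtain ws where ws: "length ws \<le> k - r - 1" "set ws \<subseteq> carrier_vec n"
    "\<And>u. u \<in> carrier_vec n \<Longrightarrow> (\<forall>i<n. i \<notin> S \<longrightarrow> u $ i = 0) \<Longrightarrow>
       (\<forall>w\<in>set ws. w \<bullet> u = 0) \<Longrightarrow> PP *\<^sub>v u = 0\<^sub>v p"
    using vec_space.rank_factor[OF PP S_sub rk] by blast
  obtain G where G: "G \<in> carrier_mat r m"
    "\<And>w. w \<in> carrier_vec m \<Longrightarrow> transpose_mat Q *\<^sub>v w = 0\<^sub>v p \<Longrightarrow> w = Y *\<^sub>v (G *\<^sub>v w)"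
    using G_ex by blast
  have GA: "G * A \<in> carrier_mat r n" using G A by simp
  define rs where "rs = map (row (G * A)) (sorted_list_of_set {..<r})"
  have rs: "set rs \<subseteq> carrier_vec n" "length rs = r"
    using rows_sel[OF GA, of "{..<r}"] unfolding rs_def by auto
  have kr: "r \<le> k" by (rule r_le_k)
  have "k - r \<noteq> 0" using rk \<open>\<not> k - r \<le> _\<close> by linarith
  then have len: "length (ws @ rs) < card S" using ws(1) rs(2) k kr by simp
  obtain u where u: "u \<in> carrier_vec n" "u \<noteq> 0\<^sub>v n" "\<forall>i<n. i \<notin> S \<longrightarrow> u $ i = 0"
    "\<forall>w\<in>set (ws @ rs). w \<bullet> u = 0"
    using underdetermined_supp[OF S_sub _ len] ws(2) rs(1) by auto
  have Pu: "PP *\<^sub>v u = 0\<^sub>v p" using ws(3)[OF u(1) u(3)] u(4) by auto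
  have Au: "A *\<^sub>v u \<in> carrier_vec m" using A u by simp
  have GAu: "G *\<^sub>v (A *\<^sub>v u) = 0\<^sub>v r"
  proof (rule eq_vecI)
    fix a assume "a < dim_vec (0\<^sub>v r)"
    then have a: "a \<in> {..<r}" by simp
    show "(G *\<^sub>v (A *\<^sub>v u)) $ a = 0\<^sub>v r $ a"
      using GA_zero[OF G(1) u(1) _ _ a] u(4) a unfolding rs_def by simp
  qed (use G in simp)
  have "A *\<^sub>v u = Y *\<^sub>v (G *\<^sub>v (A *\<^sub>v u))" using G(2)[OF Au] Pu PPu[OF u(1)] by simp
  then have "A *\<^sub>v u = 0\<^sub>v m" using GAu Y by simp
  moreover have "card {i. i < n \<and> u $ i \<noteq> 0} \<le> 2 * k - r + 1"
    using card_supp_le[OF finS, of n u] u(3) k kr by force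
  ultimately have "u = 0\<^sub>v n" using RIPz u(1) by blast
  then show False using u(2) by simp
qed


lemma S_upper: "vec_space.rank p (submatrix PP UNIV S) \<le> k - r"
proof (rule ccontr)
  assume "\<not> ?thesis"
  then have rk: "k - r + 1 \<le> vec_space.rank p (submatrix PP UNIV S)" by simp
  obtain T where T: "T \<subseteq> S" "card T = k - r + 1"
    "\<And>u. u \<in> carrier_vec n \<Longrightarrow> (\<forall>i<n. i \<notin> T \<longrightarrow> u $ i = 0) \<Longrightarrow>
       PP *\<^sub>v u = 0\<^sub>v p \<Longrightarrow> u = 0\<^sub>v n"
    using vec_space.rank_inj[OF PP S_sub rk] by blast
  have kr: "r \<le> k" by (rule r_le_k)
  have "card T \<le> card S" using card_mono[OF finS T(1)] .
  then have r1: "1 \<le> r" using T(2) k kr by simp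
  have finT: "finite T" using finite_subset[OF T(1) finS] .
  have cST: "card (S - T) = r - 1" using card_Diff_subset[OF finT T(1)] T(2) k kr r1 by simp
  have STn: "S - T \<subseteq> {..<n}" using S_sub by auto
  define ws where "ws = map (row X) (sorted_list_of_set (S - T))"
  have ws: "set ws \<subseteq> carrier_vec r" "length ws < r"
    using rows_sel(1,2)[OF X STn] cST r1 unfolding ws_def by auto
  obtain c where c: "c \<in> carrier_vec r" "c \<noteq> 0\<^sub>v r" "\<forall>w\<in>set ws. w \<bullet> c = 0"
    using underdetermined[OF ws] by auto
  define v where "v = X *\<^sub>v c"
  have v: "v \<in> carrier_vec n" unfolding v_def using X c by simp
  have supp: "\<forall>i<n. i \<notin> T \<longrightarrow> v $ i = 0"
  proof (intro allI impI)
    fix i assume i: "i < n" "i \<notin> T"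
    show "v $ i = 0"
    proof (cases "i \<in> S")
      case True
      then have "i \<in> S - T" using i by simp
      then show ?thesis using rows_sel(3)[OF X STn c(1)] c(3) unfolding ws_def v_def by simp
    qed (use Xcz[OF c(1)] i in \<open>simp add: v_def\<close>)
  qed
  have "PP *\<^sub>v v = 0\<^sub>v p" using PPu[OF v] AXc[OF c(1)] QYz[OF c(1)] unfolding v_def by simp
  then have "v = 0\<^sub>v n" using T(3)[OF v supp] by simp
  then have "c = 0\<^sub>v r" using X_inj[OF c(1)] unfolding v_def by simp
  then show False using c(2) by simp
qed


lemma bad:
  assumes I: "I \<subseteq> {..<n}" and cI: "k \<le> card I" and ne: "I \<noteq> S"
  shows "k - r < vec_space.rank p (submatrix PP UNIV I)"
proof (rule ccontr)
  assume "\<not> ?thesis"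
  then have rk: "vec_space.rank p (submatrix PP UNIV I) \<le> k - r" by simp
  obtain ws where ws: "length ws \<le> k - r" "set ws \<subseteq> carrier_vec n"
    "\<And>u. u \<in> carrier_vec n \<Longrightarrow> (\<forall>i<n. i \<notin> I \<longrightarrow> u $ i = 0) \<Longrightarrow>
       (\<forall>w\<in>set ws. w \<bullet> u = 0) \<Longrightarrow> PP *\<^sub>v u = 0\<^sub>v p"
    using vec_space.rank_factor[OF PP I rk] by blast
  obtain G where G: "G \<in> carrier_mat r m"
    "\<And>w. w \<in> carrier_vec m \<Longrightarrow> transpose_mat Q *\<^sub>v w = 0\<^sub>v p \<Longrightarrow> w = Y *\<^sub>v (G *\<^sub>v w)"
    using G_ex by blast
  have GA: "G * A \<in> carrier_mat r n" using G A by simp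
  have kr: "r \<le> k" by (rule r_le_k)
  have finI: "finite I" using I finite_subset by blast
  have key: "A *\<^sub>v u = Y *\<^sub>v (G *\<^sub>v (A *\<^sub>v u))"
    if u: "u \<in> carrier_vec n" "\<forall>i<n. i \<notin> I \<longrightarrow> u $ i = 0" "\<forall>w\<in>set ws. w \<bullet> u = 0" for u
  proof -
    have "PP *\<^sub>v u = 0\<^sub>v p" using ws(3) u by blast
    moreover have "A *\<^sub>v u \<in> carrier_vec m" using A u by simp
    ultimately show ?thesis using G(2) PPu[OF u(1)] by simp
  qed
  show False
  proof (cases "S \<subseteq> I")
    case True
    then obtain i0 where i0: "i0 \<in> I" "i0 \<notin> S" using ne by blast
    define J where "J = insert i0 S"
    have JI: "J \<subseteq> I" unfolding J_def using True i0 by simp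
    have Jn: "J \<subseteq> {..<n}" using JI I by simp
    have cJ: "card J = k + 1" unfolding J_def using finS i0 k by simp
    define rs where "rs = map (row (G * A)) (sorted_list_of_set {..<r})"
    have rs: "set rs \<subseteq> carrier_vec n" "length rs = r"
      using rows_sel[OF GA, of "{..<r}"] unfolding rs_def by auto
    have len: "length (ws @ rs) < card J" using ws(1) rs(2) cJ kr by simp
    obtain u where u: "u \<in> carrier_vec n" "u \<noteq> 0\<^sub>v n" "\<forall>i<n. i \<notin> J \<longrightarrow> u $ i = 0"
      "\<forall>w\<in>set (ws @ rs). w \<bullet> u = 0"
      using underdetermined_supp[OF Jn _ len] ws(2) rs(1) by auto
    have uI: "\<forall>i<n. i \<notin> I \<longrightarrow> u $ i = 0" using u(3) JI by blast
    have GAu: "G *\<^sub>v (A *\<^sub>v u) = 0\<^sub>v r"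
    proof (rule eq_vecI)
      fix a assume "a < dim_vec (0\<^sub>v r)"
      then have a: "a \<in> {..<r}" by simp
      show "(G *\<^sub>v (A *\<^sub>v u)) $ a = 0\<^sub>v r $ a"
        using GA_zero[OF G(1) u(1) _ _ a] u(4) a unfolding rs_def by simp
    qed (use G in simp)
    have "A *\<^sub>v u = 0\<^sub>v m" using key[OF u(1) uI] u(4) GAu Y by simp
    moreover have "card {i. i < n \<and> u $ i \<noteq> 0} \<le> 2 * k - r + 1"
    proof -
      have "card {i. i < n \<and> u $ i \<noteq> 0} \<le> card J"
        using card_supp_le[of J n u] u(3) finite_subset[OF JI finI] by force
      then show ?thesis using cJ kr by simp
    qed
    ultimately have "u = 0\<^sub>v n" using RIPz u(1) by blast
    then show False using u(2) by simp
  next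
    case False
    obtain J where J: "J \<subseteq> I" "card J = k" "finite J"
      using obtain_subset_with_card_n[OF cI] by metis
    have Jn: "J \<subseteq> {..<n}" using J I by simp
    obtain i0 where i0: "i0 \<in> S" "i0 \<notin> J" using False J(1) by blast
    have i0n: "i0 < n" using i0 S_sub by auto
    have rowi0: "row X i0 \<noteq> 0\<^sub>v r" using i0 X unfolding row_supp_def by auto
    have r1: "1 \<le> r"
    proof (rule ccontr)
      assume "\<not> 1 \<le> r"
      then have "r = 0" by simp
      then have "row X i0 = 0\<^sub>v r" using X i0n by (intro eq_vecI) auto
      then show False using rowi0 by simp
    qed
    have k1: "1 \<le> k" using kr r1 by simp
    show False
    proof (cases "card (S \<inter> J) < r")
      case True
      have SJ: "S - J = S - (S \<inter> J)" by blast
      have cSJ: "card (S - J) = k - card (S \<inter> J)"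
        unfolding SJ using card_Diff_subset[of "S \<inter> J" S] finS k by (simp add: finite_subset)
      have "r - 1 - card (S \<inter> J) \<le> card (S - J)" using cSJ kr True by simp
      then obtain D where D: "D \<subseteq> S - J" "card D = r - 1 - card (S \<inter> J)" "finite D"
        using obtain_subset_with_card_n by metis
      define F where "F = (S \<inter> J) \<union> D"
      have FS: "F \<subseteq> S" unfolding F_def using D by auto
      have SJF: "S \<inter> J \<subseteq> F" unfolding F_def by auto
      have finSJ: "finite (S \<inter> J)" using finS by simp
      have cF: "card F = r - 1"
      proof -
        have "(S \<inter> J) \<inter> D = {}" using D by auto
        then have "card F = card (S \<inter> J) + card D" unfolding F_def using card_Un_disjoint[OF finSJ D(3)] by simp
        then show ?thesis using D(2) True by simp
      qed
      have Fn: "F \<subseteq> {..<n}" using FS S_sub by auto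
      define XGA where "XGA = X * G * A"
      have XGA: "XGA \<in> carrier_mat n n" unfolding XGA_def using X G A by simp
      define rs where "rs = map (row XGA) (sorted_list_of_set F)"
      have rs: "set rs \<subseteq> carrier_vec n" "length rs = r - 1"
        using rows_sel(1,2)[OF XGA Fn] cF unfolding rs_def by auto
      have len: "length (ws @ rs) < card J" using ws(1) rs(2) J(2) kr r1 by simp
      obtain u where u: "u \<in> carrier_vec n" "u \<noteq> 0\<^sub>v n" "\<forall>i<n. i \<notin> J \<longrightarrow> u $ i = 0"
        "\<forall>w\<in>set (ws @ rs). w \<bullet> u = 0"
        using underdetermined_supp[OF Jn _ len] ws(2) rs(1) by auto
      have uI: "\<forall>i<n. i \<notin> I \<longrightarrow> u $ i = 0" using u(3) J(1) by blast
      define c where "c = G *\<^sub>v (A *\<^sub>v u)"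
      have c: "c \<in> carrier_vec r" unfolding c_def using G A u by simp
      have Au: "A *\<^sub>v u = Y *\<^sub>v c" unfolding c_def using key[OF u(1) uI] u(4) by simp
      have XcF: "(X *\<^sub>v c) $ a = 0" if a: "a \<in> F" for a
      proof -
        have "(XGA *\<^sub>v u) $ a = 0" using rows_sel(3)[OF XGA Fn u(1)] u(4) a unfolding rs_def by simp
        moreover have "XGA *\<^sub>v u = X *\<^sub>v c"
        proof -
          have XG: "X * G \<in> carrier_mat n m" using X G by simp
          have "XGA *\<^sub>v u = (X * G) *\<^sub>v (A *\<^sub>v u)"
            unfolding XGA_def by (rule assoc_mult_mat_vec[OF XG A u(1)])
          also have "\<dots> = X *\<^sub>v (G *\<^sub>v (A *\<^sub>v u))"
            by (rule assoc_mult_mat_vec[OF X G(1)], insert A u, simp)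
          finally show ?thesis unfolding c_def .
        qed
        ultimately show ?thesis by simp
      qed
      define z where "z = u - X *\<^sub>v c"
      have z: "z \<in> carrier_vec n" unfolding z_def using u X c by simp
      have zi: "z $ i = u $ i - (X *\<^sub>v c) $ i" if "i < n" for i
        unfolding z_def using that u X c by simp
      have Az: "A *\<^sub>v z = 0\<^sub>v m"
      proof -
        have "A *\<^sub>v z = A *\<^sub>v u - A *\<^sub>v (X *\<^sub>v c)" unfolding z_def
          using mult_minus_distrib_mat_vec[OF A u(1), of "X *\<^sub>v c"] X c by simp
        also have "\<dots> = Y *\<^sub>v c - Y *\<^sub>v c" using Au AXc[OF c] by simp
        also have "\<dots> = 0\<^sub>v m" using Y c by simp
        finally show ?thesis .
      qed
      have "card {i. i < n \<and> z $ i \<noteq> 0} \<le> card (J \<union> (S - F))"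
      proof (rule card_supp_le)
        show "finite (J \<union> (S - F))" using J(3) finS by simp
        fix i assume i: "i < n" "z $ i \<noteq> 0"
        show "i \<in> J \<union> (S - F)"
        proof (rule ccontr)
          assume "i \<notin> J \<union> (S - F)"
          then have "i \<notin> J" "i \<notin> S \<or> i \<in> F" by auto
          then have "u $ i = 0" "(X *\<^sub>v c) $ i = 0" using u(3) i(1) Xcz[OF c i(1)] XcF by auto
          then show False using i zi by simp
        qed
      qed
      also have "\<dots> \<le> card J + card (S - F)" by (rule card_Un_le)
      also have "\<dots> = 2 * k - r + 1"
        using card_Diff_subset[OF finite_subset[OF FS finS] FS] cF J(2) k kr r1 by simp
      finally have "z = 0\<^sub>v n" using RIPz[OF z Az] by blast
      then have uX: "u $ i = (X *\<^sub>v c) $ i" if "i < n" for i using zi[OF that] that by simp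
      have "u = 0\<^sub>v n"
      proof (rule eq_vecI)
        fix i assume "i < dim_vec (0\<^sub>v n)"
        then have i: "i < n" by simp
        have "(X *\<^sub>v c) $ i = 0"
        proof (cases "i \<in> S")
          case iS: True
          show ?thesis
          proof (cases "i \<in> J")
            case True
            then show ?thesis using iS SJF XcF by blast
          next
            case False
            then show ?thesis using u(3) i uX by simp
          qed
        qed (use Xcz[OF c i] in simp)
        then show "u $ i = 0\<^sub>v n $ i" using uX[OF i] i by simp
      qed (use u in simp)
      then show False using u(2) by simp
    next
      case False
      obtain j0 where j0: "j0 < r" "X $$ (i0, j0) \<noteq> 0"
      proof -
        have "\<exists>j0 < r. X $$ (i0, j0) \<noteq> 0"
        proof (rule ccontr)
          assume "\<not> ?thesis"
          then have "row X i0 = 0\<^sub>v r" using X i0n by (intro eq_vecI) auto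
          then show False using rowi0 by simp
        qed
        then show thesis using that by blast
      qed
      define Fr where "Fr = {..<r} - {j0}"
      have Fr: "Fr \<subseteq> {..<r}" unfolding Fr_def by auto
      have cFr: "card Fr = r - 1" unfolding Fr_def using j0 by simp
      define rs where "rs = map (row (G * A)) (sorted_list_of_set Fr)"
      have rs: "set rs \<subseteq> carrier_vec n" "length rs = r - 1"
        using rows_sel(1,2)[OF GA Fr] cFr unfolding rs_def by auto
      have len: "length (ws @ rs) < card J" using ws(1) rs(2) J(2) kr r1 by simp
      obtain u where u: "u \<in> carrier_vec n" "u \<noteq> 0\<^sub>v n" "\<forall>i<n. i \<notin> J \<longrightarrow> u $ i = 0"
        "\<forall>w\<in>set (ws @ rs). w \<bullet> u = 0"
        using underdetermined_supp[OF Jn _ len] ws(2) rs(1) by auto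
      have uI: "\<forall>i<n. i \<notin> I \<longrightarrow> u $ i = 0" using u(3) J(1) by blast
      define c where "c = G *\<^sub>v (A *\<^sub>v u)"
      have c: "c \<in> carrier_vec r" unfolding c_def using G A u by simp
      have Au: "A *\<^sub>v u = Y *\<^sub>v c" unfolding c_def using key[OF u(1) uI] u(4) by simp
      have cother: "c $ a = 0" if "a < r" "a \<noteq> j0" for a
      proof -
        have "a \<in> Fr" unfolding Fr_def using that by simp
        then show ?thesis using GA_zero[OF G(1) u(1) _ Fr] u(4) unfolding rs_def c_def by simp
      qed
      have cj0: "c $ j0 \<noteq> 0"
      proof
        assume c0: "c $ j0 = 0"
        have "c = 0\<^sub>v r"
          by (rule eq_vecI, insert c c0 cother, auto)
        then have "A *\<^sub>v u = 0\<^sub>v m" using Au Y by simp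
        moreover have "card {i. i < n \<and> u $ i \<noteq> 0} \<le> 2 * k - r + 1"
        proof -
          have "card {i. i < n \<and> u $ i \<noteq> 0} \<le> card J"
            using card_supp_le[of J n u] u(3) J(3) by force
          then show ?thesis using J(2) kr by simp
        qed
        ultimately have "u = 0\<^sub>v n" using RIPz u(1) by blast
        then show False using u(2) by simp
      qed
      have Xci0: "(X *\<^sub>v c) $ i0 = X $$ (i0, j0) * c $ j0"
      proof -
        have "(X *\<^sub>v c) $ i0 = (\<Sum>a\<in>{0..<r}. X $$ (i0, a) * c $ a)"
          using X c i0n by (simp add: scalar_prod_def)
        also have "\<dots> = X $$ (i0, j0) * c $ j0 + (\<Sum>a\<in>{0..<r} - {j0}. X $$ (i0, a) * c $ a)"
          using sum.remove[of "{0..<r}" j0] j0 by simp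
        also have "(\<Sum>a\<in>{0..<r} - {j0}. X $$ (i0, a) * c $ a) = 0"
          by (rule sum.neutral, insert cother, auto)
        finally show ?thesis by simp
      qed
      define z where "z = u - X *\<^sub>v c"
      have z: "z \<in> carrier_vec n" unfolding z_def using u X c by simp
      have zi: "z $ i = u $ i - (X *\<^sub>v c) $ i" if "i < n" for i
        unfolding z_def using that u X c by simp
      have Az: "A *\<^sub>v z = 0\<^sub>v m"
      proof -
        have "A *\<^sub>v z = A *\<^sub>v u - A *\<^sub>v (X *\<^sub>v c)" unfolding z_def
          using mult_minus_distrib_mat_vec[OF A u(1), of "X *\<^sub>v c"] X c by simp
        also have "\<dots> = Y *\<^sub>v c - Y *\<^sub>v c" using Au AXc[OF c] by simp
        also have "\<dots> = 0\<^sub>v m" using Y c by simp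
        finally show ?thesis .
      qed
      have "card {i. i < n \<and> z $ i \<noteq> 0} \<le> card (J \<union> S)"
      proof (rule card_supp_le)
        show "finite (J \<union> S)" using J(3) finS by simp
        fix i assume i: "i < n" "z $ i \<noteq> 0"
        show "i \<in> J \<union> S"
        proof (rule ccontr)
          assume "i \<notin> J \<union> S"
          then have "u $ i = 0" "(X *\<^sub>v c) $ i = 0" using u(3) i(1) Xcz[OF c i(1)] by auto
          then show False using i zi by simp
        qed
      qed
      also have "\<dots> \<le> 2 * k - r + 1"
      proof -
        have "card (J \<union> S) + card (J \<inter> S) = card J + card S" using card_Un_Int[OF J(3) finS] by simp
        moreover have "J \<inter> S = S \<inter> J" by blast
        ultimately show ?thesis using False J(2) k by simp
      qed
      finally have "z = 0\<^sub>v n" using RIPz[OF z Az] by blast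
      then have "z $ i0 = 0" using i0n by simp
      moreover have "z $ i0 = - (X $$ (i0, j0) * c $ j0)" using zi[OF i0n] u(3) i0 i0n Xci0 by simp
      ultimately show False using j0(2) cj0 by simp
    qed
  qed
qed

end

theorem theorem1:
  fixes A X Y Q :: "real mat" and m n r k p :: nat and \<delta> :: real
  assumes A: "A \<in> carrier_mat m n"
    and X: "X \<in> carrier_mat n r"
    and Y: "Y \<in> carrier_mat m r"
    and AXY: "A * X = Y"
    and k: "card (row_supp X) = k"
    and Y_indep: "\<forall>c \<in> carrier_vec r. Y *\<^sub>v c = 0\<^sub>v m \<longrightarrow> c = 0\<^sub>v r"
    and Q: "Q \<in> carrier_mat m p"
    and Q_indep: "\<forall>c \<in> carrier_vec p. Q *\<^sub>v c = 0\<^sub>v m \<longrightarrow> c = 0\<^sub>v p"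
    and Q_span: "{Q *\<^sub>v c | c. c \<in> carrier_vec p} =
                 {v \<in> carrier_vec m. \<forall>d \<in> carrier_vec r. v \<bullet> (Y *\<^sub>v d) = 0}"
    and RIP: "left_RIP A (2 * k - r + 1) \<delta>"
  shows "int k - int r =
           int (Min {vec_space.rank p (transpose_mat Q * cols_sub A I) | I.
                      I \<subseteq> {0..<n} \<and> card I \<ge> k}) \<and>
         {I. I \<subseteq> {0..<n} \<and> card I \<ge> k \<and>
            vec_space.rank p (transpose_mat Q * cols_sub A I) =
              Min {vec_space.rank p (transpose_mat Q * cols_sub A J) | J.
                      J \<subseteq> {0..<n} \<and> card J \<ge> k}} = {row_supp X}"
proof -
  interpret c: ctx A X Y Q m n r k p \<delta>
    by (rule ctx.intro[OF A X Y AXY k Y_indep Q Q_indep Q_span RIP])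
  define R where "R I = vec_space.rank p (transpose_mat Q * cols_sub A I)" for I
  have R: "R I = vec_space.rank p (submatrix (transpose_mat Q * A) UNIV I)" for I
    unfolding R_def cols_sub_def using mult_submatrix[of "transpose_mat Q" p m A n I] Q A by simp
  have kr: "r \<le> k" by (rule c.r_le_k)
  define SS where "SS = {R I | I. I \<subseteq> {0..<n} \<and> card I \<ge> k}"
  have SSeq: "SS = {vec_space.rank p (transpose_mat Q * cols_sub A I) | I. I \<subseteq> {0..<n} \<and> card I \<ge> k}"
    unfolding SS_def R_def ..
  have Sn: "row_supp X \<subseteq> {0..<n}" using c.S_sub by auto
  have RS: "R (row_supp X) = k - r" unfolding R using c.S_lower c.S_upper by simp
  have bad: "k - r < R I" if "I \<subseteq> {0..<n}" "k \<le> card I" "I \<noteq> row_supp X" for I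
  proof -
    have "I \<subseteq> {..<n}" using that(1) by auto
    then have "k - r < vec_space.rank p (submatrix (transpose_mat Q * A) UNIV I)"
      by (rule c.bad[OF _ that(2,3)])
    then show ?thesis unfolding R .
  qed
  have fin: "finite SS"
  proof -
    have "SS \<subseteq> R ` Pow {0..<n}" unfolding SS_def by auto
    then show ?thesis by (rule finite_subset) simp
  qed
  have mem: "k - r \<in> SS"
  proof -
    have "R (row_supp X) \<in> SS" unfolding SS_def using Sn k
      by (intro CollectI exI[of _ "row_supp X"]) simp
    then show ?thesis using RS by simp
  qed
  have lb: "k - r \<le> y" if "y \<in> SS" for y
  proof -
    from that obtain I where I: "y = R I" "I \<subseteq> {0..<n}" "k \<le> card I" unfolding SS_def by blast
    show ?thesis
    proof (cases "I = row_supp X")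
      case True then show ?thesis using I RS by simp
    next
      case False then show ?thesis using bad[OF I(2,3)] I(1) by simp
    qed
  qed
  have Min: "Min SS = k - r" by (rule Min_eqI[OF fin lb mem])
  have part1: "int k - int r = int (Min SS)" using Min kr by simp
  have part2: "{I. I \<subseteq> {0..<n} \<and> card I \<ge> k \<and> R I = Min SS} = {row_supp X}"
  proof
    show "{I. I \<subseteq> {0..<n} \<and> card I \<ge> k \<and> R I = Min SS} \<subseteq> {row_supp X}"
    proof
      fix I assume "I \<in> {I. I \<subseteq> {0..<n} \<and> card I \<ge> k \<and> R I = Min SS}"
      then have I: "I \<subseteq> {0..<n}" "k \<le> card I" "R I = k - r" using Min by auto
      show "I \<in> {row_supp X}"
      proof (rule ccontr)
        assume "I \<notin> {row_supp X}"
        then show False using bad[OF I(1,2)] I(3) by simp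
      qed
    qed
    show "{row_supp X} \<subseteq> {I. I \<subseteq> {0..<n} \<and> card I \<ge> k \<and> R I = Min SS}"
      using Sn k RS Min by simp
  qed
  show ?thesis using part1 part2 unfolding SSeq R_def by simp
qed

end
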